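(* Let $a,b$ be distinct elements of $\{6,7,8\}$. Suppose $G$ is a planar graph with no cycles of length $4$, $a$, $b$ or $9$, $s\ge1$, $H$ is a cover of $G$ with respect to $L(v)=\{1,\dots,s\}$ for all $v$, and $F=(f_1,\dots,f_s)$ with $f_i(v)\in\{0,1,2\}$ and $f_1(v)+\cdots+f_s(v)\ge 3$ for all $v$, such that $(G,H)$ has no DP-$F$-coloring, and suppose $|V(G)|$ is minimum among all such $(G,H,F)$ (a minimal counterexample). Then every vertex of $G$ has degree at least $3$.
   Context: A cover $H$ of $G$ w.r.t. $L$ has vertex set $\{(u,c):c\in L(u)\}$, each $\{u\}\times L(u)$ is a clique, for each edge $uv$ the edges between $\{u\}\times L(u)$ and $\{v\}\times L(v)$ form a matching, and there are no such edges for non-adjacent $u,v$. A representative set contains exactly one vertex of each $\{v\}\times L(v)$. A DP-$F$-coloring of $(G,H)$ is a representative set $R$ admitting an ordering in which each $(v,i)\in R$ has fewer than $f_i(v)$ $H$-neighbors among earlier elements of $R$. *)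

theory Defs
  imports "HOL-Analysis.Analysis"
begin

definition simple_graph :: "'v set \<Rightarrow> 'v set set \<Rightarrow> bool" where
  "simple_graph V E \<longleftrightarrow> finite V \<and>
     (\<forall>e\<in>E. \<exists>u v. e = {u, v} \<and> u \<noteq> v \<and> u \<in> V \<and> v \<in> V)"

definition degree :: "'v set set \<Rightarrow> 'v \<Rightarrow> nat" where
  "degree E v = card {u. {v, u} \<in> E}"

definition has_cycle_of_length :: "'v set \<Rightarrow> 'v set set \<Rightarrow> nat \<Rightarrow> bool" where
  "has_cycle_of_length V E k \<longleftrightarrow> 3 \<le> k \<and>
     (\<exists>xs. length xs = k \<and> distinct xs \<and> set xs \<subseteq> V \<and>
        (\<forall>i<k. {xs ! i, xs ! ((i + 1) mod k)} \<in> E))"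

definition planar :: "'v set \<Rightarrow> 'v set set \<Rightarrow> bool" where
  "planar V E \<longleftrightarrow> (\<exists>(p :: 'v \<Rightarrow> real^2) (\<gamma> :: 'v set \<Rightarrow> real \<Rightarrow> real^2).
     inj_on p V \<and>
     (\<forall>e\<in>E. arc (\<gamma> e) \<and> {pathstart (\<gamma> e), pathfinish (\<gamma> e)} = p ` e \<and>
              path_image (\<gamma> e) \<inter> p ` V = p ` e) \<and>
     (\<forall>e\<in>E. \<forall>e'\<in>E. e \<noteq> e' \<longrightarrow> path_image (\<gamma> e) \<inter> path_image (\<gamma> e') \<subseteq> p ` (e \<inter> e')))"

text \<open>A cover H (edge set EH) of G = (V,E) w.r.t. the list assignment L.
  Vertex set of H is {(u,c). u \<in> V, c \<in> L u}.\<close>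
definition is_cover :: "'v set \<Rightarrow> 'v set set \<Rightarrow> ('v \<Rightarrow> nat set) \<Rightarrow> ('v \<times> nat) set set \<Rightarrow> bool" where
  "is_cover V E L EH \<longleftrightarrow>
     simple_graph (Sigma V L) EH \<and>
     (\<forall>u\<in>V. \<forall>c\<in>L u. \<forall>c'\<in>L u. c \<noteq> c' \<longrightarrow> {(u, c), (u, c')} \<in> EH) \<and>
     (\<forall>u c v d. {(u, c), (v, d)} \<in> EH \<and> u \<noteq> v \<longrightarrow> {u, v} \<in> E) \<and>
     (\<forall>u v c d d'. u \<noteq> v \<and> {(u, c), (v, d)} \<in> EH \<and> {(u, c), (v, d')} \<in> EH \<longrightarrow> d = d') \<and>
     (\<forall>u v c c' d. u \<noteq> v \<and> {(u, c), (v, d)} \<in> EH \<and> {(u, c'), (v, d)} \<in> EH \<longrightarrow> c = c')"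

definition representative_set :: "'v set \<Rightarrow> ('v \<Rightarrow> nat set) \<Rightarrow> ('v \<times> nat) set \<Rightarrow> bool" where
  "representative_set V L R \<longleftrightarrow> R \<subseteq> Sigma V L \<and> (\<forall>v\<in>V. \<exists>!c. (v, c) \<in> R)"

text \<open>DP-F-coloring, F = (f_1,...,f_s) given as f i v.  An ordering of R is a
  distinct list enumerating R.\<close>
definition DP_F_coloring :: "'v set \<Rightarrow> ('v \<Rightarrow> nat set) \<Rightarrow> ('v \<times> nat) set set
     \<Rightarrow> (nat \<Rightarrow> 'v \<Rightarrow> nat) \<Rightarrow> ('v \<times> nat) set \<Rightarrow> bool" where
  "DP_F_coloring V L EH f R \<longleftrightarrow> representative_set V L R \<and>
     (\<exists>xs. distinct xs \<and> set xs = R \<and>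
        (\<forall>j<length xs. card {y \<in> set (take j xs). {y, xs ! j} \<in> EH}
                         < f (snd (xs ! j)) (fst (xs ! j))))"

text \<open>The hypotheses of the counterexample (without minimality).\<close>
definition counterexample :: "nat \<Rightarrow> nat \<Rightarrow> 'v set \<Rightarrow> 'v set set \<Rightarrow> nat
     \<Rightarrow> ('v \<times> nat) set set \<Rightarrow> (nat \<Rightarrow> 'v \<Rightarrow> nat) \<Rightarrow> bool" where
  "counterexample a b V E s EH f \<longleftrightarrow>
     simple_graph V E \<and> planar V E \<and>
     \<not> has_cycle_of_length V E 4 \<and> \<not> has_cycle_of_length V E a \<and>
     \<not> has_cycle_of_length V E b \<and> \<not> has_cycle_of_length V E 9 \<and>
     1 \<le> s \<and> is_cover V E (\<lambda>_. {1..s}) EH \<and>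
     (\<forall>v\<in>V. (\<forall>i\<in>{1..s}. f i v \<in> {0, 1, 2}) \<and> (\<Sum>i=1..s. f i v) \<ge> 3) \<and>
     \<not> (\<exists>R. DP_F_coloring V (\<lambda>_. {1..s}) EH f R)"

end

theory Submission
  imports Defs
begin

lemma extend_coloring:
  fixes V :: "'v set" and EH :: "('v \<times> nat) set set"
  assumes sg: "simple_graph V E" and cov: "is_cover V E (\<lambda>_. {1..s}) EH"
    and vV: "v \<in> V" and deg: "degree E v \<le> 2"
    and fsum: "(\<Sum>i=1..s. f i v) \<ge> 3"
    and col: "DP_F_coloring (V - {v}) (\<lambda>_. {1..s})
               {e\<in>EH. e \<subseteq> Sigma (V - {v}) (\<lambda>_. {1..s})} f R'"
  shows "\<exists>R. DP_F_coloring V (\<lambda>_. {1..s}) EH f R"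
proof -
  let ?L = "(\<lambda>_::'v. {1..s::nat})"
  let ?V' = "V - {v}"
  let ?EH' = "{e\<in>EH. e \<subseteq> Sigma ?V' ?L}"
  have rep': "representative_set ?V' ?L R'" using col unfolding DP_F_coloring_def by blast
  then have R'sub: "R' \<subseteq> Sigma ?V' ?L" and R'uni: "\<forall>w\<in>?V'. \<exists>!c. (w, c) \<in> R'"
    unfolding representative_set_def by auto
  obtain xs' where dxs: "distinct xs'" and sxs: "set xs' = R'" and
    cnd: "\<forall>j<length xs'. card {y \<in> set (take j xs'). {y, xs' ! j} \<in> ?EH'}
                         < f (snd (xs' ! j)) (fst (xs' ! j))"
    using col unfolding DP_F_coloring_def by blast
  have finV: "finite V" using sg unfolding simple_graph_def by blast
  have finR': "finite R'" using R'sub finV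
    by (meson finite_SigmaI finite_atLeastAtMost finite_Diff finite_subset)
  define N where "N i = {y \<in> R'. {y, (v, i)} \<in> EH}" for i
  have match: "\<And>u c d d'. u \<noteq> v \<Longrightarrow> {(u, c), (v, d)} \<in> EH \<Longrightarrow> {(u, c), (v, d')} \<in> EH \<Longrightarrow> d = d'"
    using cov unfolding is_cover_def by blast
  have edgeE: "\<And>u c d. u \<noteq> v \<Longrightarrow> {(u, c), (v, d)} \<in> EH \<Longrightarrow> {v, u} \<in> E"
    using cov unfolding is_cover_def by (metis insert_commute)
  have nbfin: "finite {u. {v, u} \<in> E}"
  proof (rule finite_subset[OF _ finV])
    show "{u. {v, u} \<in> E} \<subseteq> V"
    proof
      fix u assume "u \<in> {u. {v, u} \<in> E}"
      then have "{v, u} \<in> E" by simp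
      then obtain x y where "{v, u} = {x, y}" "x \<in> V" "y \<in> V"
        using sg unfolding simple_graph_def by blast
      then show "u \<in> V" by (metis doubleton_eq_iff)
    qed
  qed
  have "\<exists>i\<in>{1..s}. card (N i) < f i v"
  proof (rule ccontr)
    assume "\<not> ?thesis"
    then have le: "\<forall>i\<in>{1..s}. f i v \<le> card (N i)" by auto
    have finN: "\<And>i. finite (N i)" using finR' unfolding N_def by auto
    have "3 \<le> (\<Sum>i=1..s. f i v)" by (rule fsum)
    also have "\<dots> \<le> (\<Sum>i=1..s. card (N i))" using le by (intro sum_mono) auto
    also have "\<dots> = card (Sigma {1..s} N)" using finN by (simp add: card_SigmaI)
    also have "\<dots> \<le> card {u. {v, u} \<in> E}"
    proof (rule card_inj_on_le[where f = "\<lambda>(i, y). fst y"])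
      show "inj_on (\<lambda>(i, y). fst y) (Sigma {1..s} N)"
      proof (rule inj_onI)
        fix p q assume p: "p \<in> Sigma {1..s} N" and q: "q \<in> Sigma {1..s} N"
          and eq: "(\<lambda>(i, y). fst y) p = (\<lambda>(i, y). fst y) q"
        obtain i y where pi: "p = (i, y)" by (cases p)
        obtain i' y' where qi: "q = (i', y')" by (cases q)
        obtain u c where yu: "y = (u, c)" by (cases y)
        obtain u' c' where yu': "y' = (u', c')" by (cases y')
        have uu: "u = u'" using eq pi qi yu yu' by simp
        have yR: "(u, c) \<in> R'" and yR': "(u, c') \<in> R'"
          using p q pi qi yu yu' uu N_def by auto
        have uV: "u \<in> ?V'" using yR R'sub by auto
        have "c = c'" using R'uni uV yR yR' by blast
        moreover have "{(u, c), (v, i)} \<in> EH" "{(u, c), (v, i')} \<in> EH"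
          using p q pi qi yu yu' uu \<open>c = c'\<close> N_def by auto
        then have "i = i'" using match uV by blast
        ultimately show "p = q" using pi qi yu yu' uu by simp
      qed
      show "(\<lambda>(i, y). fst y) ` Sigma {1..s} N \<subseteq> {u. {v, u} \<in> E}"
      proof
        fix x assume "x \<in> (\<lambda>(i, y). fst y) ` Sigma {1..s} N"
        then obtain i u c where "x = u" "(u, c) \<in> R'" "{(u, c), (v, i)} \<in> EH"
          unfolding N_def by auto
        moreover then have "u \<noteq> v" using R'sub by auto
        ultimately show "x \<in> {u. {v, u} \<in> E}" using edgeE by blast
      qed
    qed (rule nbfin)
    also have "\<dots> \<le> 2" using deg unfolding degree_def .
    finally show False by simp
  qed
  then obtain i where iS: "i \<in> {1..s}" and ci: "card (N i) < f i v" by blast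
  define xs where "xs = xs' @ [(v, i)]"
  have notin: "(v, i) \<notin> R'" using R'sub by auto
  have "representative_set V ?L (insert (v, i) R')"
    unfolding representative_set_def
  proof (intro conjI ballI)
    show "insert (v, i) R' \<subseteq> Sigma V ?L" using R'sub iS vV by auto
  next
    fix w assume wV: "w \<in> V"
    show "\<exists>!c. (w, c) \<in> insert (v, i) R'"
    proof (cases "w = v")
      case True
      then show ?thesis using R'sub by auto
    next
      case False
      then have "w \<in> ?V'" using wV by auto
      then show ?thesis using R'uni False by auto
    qed
  qed
  moreover have "distinct xs" using dxs notin sxs xs_def by auto
  moreover have "set xs = insert (v, i) R'" using sxs xs_def by auto
  moreover have "\<forall>j<length xs. card {y \<in> set (take j xs). {y, xs ! j} \<in> EH}
                         < f (snd (xs ! j)) (fst (xs ! j))"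
  proof (intro allI impI)
    fix j assume j: "j < length xs"
    show "card {y \<in> set (take j xs). {y, xs ! j} \<in> EH} < f (snd (xs ! j)) (fst (xs ! j))"
    proof (cases "j < length xs'")
      case True
      have tk: "take j xs = take j xs'" and nt: "xs ! j = xs' ! j"
        using True xs_def by (auto simp: nth_append)
      have mem: "xs' ! j \<in> Sigma ?V' ?L" using True R'sub sxs nth_mem by blast
      have "{y \<in> set (take j xs). {y, xs ! j} \<in> EH} = {y \<in> set (take j xs'). {y, xs' ! j} \<in> ?EH'}"
      proof -
        have "\<And>y. y \<in> set (take j xs') \<Longrightarrow> y \<in> Sigma ?V' ?L"
          using R'sub sxs by (meson in_set_takeD subsetD)
        then show ?thesis using tk nt mem by auto
      qed
      then show ?thesis using cnd True nt by simp
    next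
      case False
      then have jj: "j = length xs'" using j xs_def by simp
      have "{y \<in> set (take j xs). {y, xs ! j} \<in> EH} = N i"
        using jj xs_def sxs N_def by auto
      then show ?thesis using ci jj xs_def by simp
    qed
  qed
  ultimately show ?thesis unfolding DP_F_coloring_def by blast
qed


theorem lemma3:
  fixes a b s :: nat and V :: "nat set" and E :: "nat set set"
    and EH :: "(nat \<times> nat) set set" and f :: "nat \<Rightarrow> nat \<Rightarrow> nat"
  assumes "a \<in> {6, 7, 8}" and "b \<in> {6, 7, 8}" and "a \<noteq> b"
    and "counterexample a b V E s EH f"
    and "\<And>(V' :: nat set) E' s' EH' f'. counterexample a b V' E' s' EH' f' \<Longrightarrow> card V \<le> card V'"
  shows "\<forall>v\<in>V. degree E v \<ge> 3"
proof (rule ccontr)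
  assume "\<not> (\<forall>v\<in>V. degree E v \<ge> 3)"
  then obtain v where vV: "v \<in> V" and dg0: "\<not> degree E v \<ge> 3" by blast
  then have dg: "degree E v \<le> 2" by simp
  let ?L = "(\<lambda>_::nat. {1..s})"
  define V' where "V' = V - {v}"
  define E' where "E' = {e\<in>E. v \<notin> e}"
  define EH' where "EH' = {e\<in>EH. e \<subseteq> Sigma V' ?L}"
  have ce: "counterexample a b V E s EH f" by fact
  have sg: "simple_graph V E" and pl: "planar V E"
    and c4: "\<not> has_cycle_of_length V E 4" and ca: "\<not> has_cycle_of_length V E a"
    and cb: "\<not> has_cycle_of_length V E b" and c9: "\<not> has_cycle_of_length V E 9"
    and s1: "1 \<le> s" and cov: "is_cover V E ?L EH"
    and fc: "\<forall>v\<in>V. (\<forall>i\<in>{1..s}. f i v \<in> {0, 1, 2}) \<and> (\<Sum>i=1..s. f i v) \<ge> 3"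
    and nc: "\<not> (\<exists>R. DP_F_coloring V ?L EH f R)"
    using ce unfolding counterexample_def by blast+
  have finV: "finite V" using sg unfolding simple_graph_def by blast
  have sub: "V' \<subseteq> V" "E' \<subseteq> E" unfolding V'_def E'_def by auto
  have sg': "simple_graph V' E'"
    unfolding simple_graph_def
  proof (intro conjI ballI)
    show "finite V'" using finV sub(1) finite_subset by blast
  next
    fix e assume "e \<in> E'"
    then have eE: "e \<in> E" and ve: "v \<notin> e" unfolding E'_def by auto
    then obtain x y where "e = {x, y}" "x \<noteq> y" "x \<in> V" "y \<in> V"
      using sg unfolding simple_graph_def by blast
    then show "\<exists>u w. e = {u, w} \<and> u \<noteq> w \<and> u \<in> V' \<and> w \<in> V'"
      using ve unfolding V'_def by blast
  qed
  have pl': "planar V' E'"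
  proof -
    obtain p :: "nat \<Rightarrow> real^2" and \<gamma> :: "nat set \<Rightarrow> real \<Rightarrow> real^2" where inj: "inj_on p V" and
      ed: "\<forall>e\<in>E. arc (\<gamma> e) \<and> {pathstart (\<gamma> e), pathfinish (\<gamma> e)} = p ` e \<and>
              path_image (\<gamma> e) \<inter> p ` V = p ` e" and
      cr: "\<forall>e\<in>E. \<forall>e'\<in>E. e \<noteq> e' \<longrightarrow> path_image (\<gamma> e) \<inter> path_image (\<gamma> e') \<subseteq> p ` (e \<inter> e')"
      using pl unfolding planar_def by blast
    have "\<forall>e\<in>E'. arc (\<gamma> e) \<and> {pathstart (\<gamma> e), pathfinish (\<gamma> e)} = p ` e \<and>
              path_image (\<gamma> e) \<inter> p ` V' = p ` e"
    proof
      fix e assume eE': "e \<in> E'"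
      then have eE: "e \<in> E" and ve: "v \<notin> e" unfolding E'_def by auto
      obtain x y where "e = {x, y}" "x \<in> V" "y \<in> V"
        using sg eE unfolding simple_graph_def by blast
      then have eV: "e \<subseteq> V" by simp
      then have eV': "e \<subseteq> V'" using ve unfolding V'_def by auto
      have h1: "arc (\<gamma> e)" and h2: "{pathstart (\<gamma> e), pathfinish (\<gamma> e)} = p ` e"
        and h3: "path_image (\<gamma> e) \<inter> p ` V = p ` e" using ed eE by auto
      have "{pathstart (\<gamma> e), pathfinish (\<gamma> e)} \<subseteq> path_image (\<gamma> e)"
        by (simp add: pathfinish_in_path_image pathstart_in_path_image)
      then have pe: "p ` e \<subseteq> path_image (\<gamma> e)" using h2 by simp
      have pe2: "p ` e \<subseteq> p ` V'" using eV' by (rule image_mono)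
      have pv: "p ` V' \<subseteq> p ` V" using sub(1) by (rule image_mono)
      have "path_image (\<gamma> e) \<inter> p ` V' = p ` e"
      proof
        show "path_image (\<gamma> e) \<inter> p ` V' \<subseteq> p ` e" using h3 pv by blast
        show "p ` e \<subseteq> path_image (\<gamma> e) \<inter> p ` V'" using pe pe2 by blast
      qed
      then show "arc (\<gamma> e) \<and> {pathstart (\<gamma> e), pathfinish (\<gamma> e)} = p ` e \<and>
              path_image (\<gamma> e) \<inter> p ` V' = p ` e"
        using h1 h2 by blast
    qed
    moreover have "inj_on p V'" using inj sub(1) inj_on_subset by blast
    moreover have "\<forall>e\<in>E'. \<forall>e'\<in>E'. e \<noteq> e' \<longrightarrow> path_image (\<gamma> e) \<inter> path_image (\<gamma> e') \<subseteq> p ` (e \<inter> e')"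
      using cr sub(2) by blast
    ultimately show ?thesis unfolding planar_def by blast
  qed
  have cyc: "\<And>k. has_cycle_of_length V' E' k \<Longrightarrow> has_cycle_of_length V E k"
    unfolding has_cycle_of_length_def using sub by blast
  have cov': "is_cover V' E' ?L EH'"
  proof -
    have "simple_graph (Sigma V' ?L) EH'"
      unfolding simple_graph_def
    proof (intro conjI ballI)
      show "finite (Sigma V' ?L)" using finV sub(1)
        by (meson finite_SigmaI finite_atLeastAtMost finite_subset)
    next
      fix e assume "e \<in> EH'"
      then have eE: "e \<in> EH" and es: "e \<subseteq> Sigma V' ?L" unfolding EH'_def by auto
      have sgH: "simple_graph (Sigma V ?L) EH" using cov unfolding is_cover_def by (rule conjunct1)
      have "\<exists>x y. e = {x, y} \<and> x \<noteq> y \<and> x \<in> Sigma V ?L \<and> y \<in> Sigma V ?L"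
        using sgH unfolding simple_graph_def using eE by (elim conjE bspec)
      then obtain x y where "e = {x, y}" "x \<noteq> y" by (elim exE conjE) simp
      then show "\<exists>u w. e = {u, w} \<and> u \<noteq> w \<and> u \<in> Sigma V' ?L \<and> w \<in> Sigma V' ?L"
        using es by blast
    qed
    moreover have "\<forall>u\<in>V'. \<forall>c\<in>?L u. \<forall>c'\<in>?L u. c \<noteq> c' \<longrightarrow> {(u, c), (u, c')} \<in> EH'"
    proof (intro ballI impI)
      fix u c c' assume u: "u \<in> V'" and c: "c \<in> ?L u" and c': "c' \<in> ?L u" and ne: "c \<noteq> c'"
      have cl: "\<forall>u\<in>V. \<forall>c\<in>?L u. \<forall>c'\<in>?L u. c \<noteq> c' \<longrightarrow> {(u, c), (u, c')} \<in> EH"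
        using cov unfolding is_cover_def by (elim conjE)
      have "u \<in> V" using u sub(1) by blast
      then have "{(u, c), (u, c')} \<in> EH" using cl c c' ne by blast
      moreover have "{(u, c), (u, c')} \<subseteq> Sigma V' ?L" using u c c' by simp
      ultimately show "{(u, c), (u, c')} \<in> EH'" unfolding EH'_def by simp
    qed
    moreover have "\<forall>u c w d. {(u, c), (w, d)} \<in> EH' \<and> u \<noteq> w \<longrightarrow> {u, w} \<in> E'"
    proof (intro allI impI)
      fix u c w d assume h: "{(u, c), (w, d)} \<in> EH' \<and> u \<noteq> w"
      then have "{(u, c), (w, d)} \<in> EH" "u \<noteq> w" and ins: "{(u, c), (w, d)} \<subseteq> Sigma V' ?L"
        unfolding EH'_def by auto
      then have "{u, w} \<in> E" using cov unfolding is_cover_def by blast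
      moreover have "u \<noteq> v" "w \<noteq> v" using ins unfolding V'_def by auto
      ultimately show "{u, w} \<in> E'" unfolding E'_def by auto
    qed
    moreover have "\<forall>u w c d d'. u \<noteq> w \<and> {(u, c), (w, d)} \<in> EH' \<and> {(u, c), (w, d')} \<in> EH' \<longrightarrow> d = d'"
      using cov unfolding is_cover_def EH'_def by blast
    moreover have "\<forall>u w c c' d. u \<noteq> w \<and> {(u, c), (w, d)} \<in> EH' \<and> {(u, c'), (w, d)} \<in> EH' \<longrightarrow> c = c'"
      using cov unfolding is_cover_def EH'_def by blast
    ultimately show ?thesis unfolding is_cover_def by blast
  qed
  have fc': "\<forall>v\<in>V'. (\<forall>i\<in>{1..s}. f i v \<in> {0, 1, 2}) \<and> (\<Sum>i=1..s. f i v) \<ge> 3"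
    using fc sub by blast
  show False
  proof (cases "\<exists>R. DP_F_coloring V' ?L EH' f R")
    case True
    then obtain R' where "DP_F_coloring V' ?L EH' f R'" by blast
    then have "\<exists>R. DP_F_coloring V ?L EH f R"
      using extend_coloring[OF sg cov vV dg, of f] fc vV unfolding V'_def EH'_def by blast
    then show False using nc by blast
  next
    case False
    then have "counterexample a b V' E' s EH' f"
      unfolding counterexample_def using sg' pl' cyc c4 ca cb c9 s1 cov' fc' by blast
    then have "card V \<le> card V'" by (rule assms(5))
    moreover have "card V' < card V" unfolding V'_def
      using card_Diff1_less[OF finV vV] by simp
    ultimately show False by simp
  qed
qed

end
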